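(* Let $\preceq$ be an $\omega$-recognizable preorder over $\Sigma$ and $\sim$ its induced equivalence relation. Then every equivalence class of $\sim$ contains a lasso (an ultimately periodic word $\mu(\nu)^\omega$ with $\mu,\nu\in\Sigma^*$, $\nu$ nonempty). Moreover, for every $x\in\Sigma^\omega$ there exists a prefix $\mu\nu$ of $x$ such that $x\sim\mu(\nu)^\omega$.
   Context: A relation on $\Sigma^\omega$ is $\omega$-recognizable if it equals $\bigcup_{k=1}^{\ell}X_k\times Y_k$ with $X_k,Y_k\subseteq\Sigma^\omega$ $\omega$-regular. A preorder is reflexive and transitive; $x\sim y$ iff $x\preceq y$ and $y\preceq x$. *)

theory Defs
  imports Main "HOL-Library.Omega_Words_Fun"
begin

definition buchi_lang ::
  "nat set \<Rightarrow> (nat \<Rightarrow> 'a \<Rightarrow> nat set) \<Rightarrow> nat set \<Rightarrow> 'a word set" where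
  "buchi_lang I \<delta> F =
     {w. \<exists>r::nat \<Rightarrow> nat. r 0 \<in> I \<and> (\<forall>i. r (Suc i) \<in> \<delta> (r i) (w i))
                   \<and> (\<exists>\<^sub>\<infinity>i. r i \<in> F)}"

definition omega_regular :: "('a::finite) word set \<Rightarrow> bool" where
  "omega_regular L \<longleftrightarrow>
     (\<exists>(Q::nat set) I \<delta> F. finite Q \<and> I \<subseteq> Q \<and> F \<subseteq> Q \<and>
        (\<forall>q a. q \<in> Q \<longrightarrow> \<delta> q a \<subseteq> Q) \<and> L = buchi_lang I \<delta> F)"

definition omega_recognizable :: "(('a::finite) word \<times> 'a word) set \<Rightarrow> bool" where
  "omega_recognizable R \<longleftrightarrow>
     (\<exists>(l::nat) X Y. (\<forall>k\<in>{1..l}. omega_regular (X k) \<and> omega_regular (Y k)) \<and>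
        R = (\<Union>k\<in>{1..l}. X k \<times> Y k))"

definition induced_equiv :: "('b \<times> 'b) set \<Rightarrow> 'b \<Rightarrow> 'b \<Rightarrow> bool" where
  "induced_equiv R x y \<longleftrightarrow> (x, y) \<in> R \<and> (y, x) \<in> R"

end

theory Submission
  imports Defs
begin

lemma lasso_nth:
  assumes "i < j"
  shows "(prefix i x \<frown> (x [i \<rightarrow> j])\<^sup>\<omega>) n =
         (if n < i then x n else x (i + (n - i) mod (j - i)))"
  using assms by simp

lemma lasso_run:
  fixes x :: "'a word" and r :: "nat \<Rightarrow> nat"
  assumes run: "\<forall>n. r (Suc n) \<in> \<delta> (r n) (x n)"
    and ij: "i < j" and eq: "r i = r j"
    and a: "i \<le> a" "a < j" "r a \<in> F"
    and r0: "r 0 \<in> I"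
  shows "prefix i x \<frown> (x [i \<rightarrow> j])\<^sup>\<omega> \<in> buchi_lang I \<delta> F"
proof -
  define r' where "r' n = (if n < i then r n else r (i + (n - i) mod (j - i)))" for n
  have "r' 0 \<in> I"
  proof (cases "0 < i")
    case True then show ?thesis using r0 by (simp add: r'_def)
  next
    case False then show ?thesis using r0 by (simp add: r'_def)
  qed
  moreover have "\<forall>n. r' (Suc n) \<in> \<delta> (r' n) ((prefix i x \<frown> (x [i \<rightarrow> j])\<^sup>\<omega>) n)"
  proof
    fix n
    show "r' (Suc n) \<in> \<delta> (r' n) ((prefix i x \<frown> (x [i \<rightarrow> j])\<^sup>\<omega>) n)"
    proof (cases "n < i")
      case True
      show ?thesis
      proof (cases "Suc n < i")
        case True
        then show ?thesis using run ij \<open>n < i\<close> by (auto simp: r'_def lasso_nth)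
      next
        case False
        then have "Suc n = i" using \<open>n < i\<close> by simp
        have "r' (Suc n) = r (Suc n)" using \<open>Suc n = i\<close> by (simp add: r'_def)
        moreover have "r' n = r n" using \<open>n < i\<close> by (simp add: r'_def)
        moreover have "(prefix i x \<frown> (x [i \<rightarrow> j])\<^sup>\<omega>) n = x n"
          using \<open>n < i\<close> ij by (simp add: lasso_nth)
        ultimately show ?thesis using run by simp
      qed
    next
      case False
      define m where "m = (n - i) mod (j - i)"
      have mlt: "m < j - i" using ij by (simp add: m_def)
      have rn: "r' n = r (i + m)" using False by (simp add: r'_def m_def)
      have yn: "(prefix i x \<frown> (x [i \<rightarrow> j])\<^sup>\<omega>) n = x (i + m)"
        using False ij by (simp add: lasso_nth m_def)
      have sm: "(Suc n - i) mod (j - i) = (Suc m) mod (j - i)"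
        using False by (simp add: m_def Suc_diff_le mod_Suc_eq)
      have rs: "r' (Suc n) = r (i + (Suc m) mod (j - i))"
        using False by (simp add: r'_def sm)
      show ?thesis
      proof (cases "Suc m < j - i")
        case True
        then show ?thesis using rn yn rs run by (metis add_Suc_right mod_less)
      next
        case False
        then have "Suc m = j - i" using mlt by simp
        then have "r' (Suc n) = r i" "Suc (i + m) = j" using rs ij by auto
        then show ?thesis using rn yn run eq by metis
      qed
    qed
  qed
  moreover have "\<exists>\<^sub>\<infinity>n. r' n \<in> F"
    unfolding INFM_nat
  proof
    fix m
    define n where "n = a + Suc m * (j - i)"
    have "Suc m * 1 \<le> Suc m * (j - i)" using ij by (intro mult_le_mono2) simp
    then have "m < n" by (simp add: n_def)
    moreover have "r' n = r a"
    proof -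
      have "\<not> n < i" using a by (simp add: n_def)
      moreover have "(n - i) mod (j - i) = a - i"
      proof -
        have "n - i = (a - i) + Suc m * (j - i)" using a unfolding n_def by linarith
        then have "(n - i) mod (j - i) = (a - i) mod (j - i)" by (simp only: mod_mult_self1)
        also have "\<dots> = a - i" using a by simp
        finally show ?thesis .
      qed
      ultimately show ?thesis using a by (simp add: r'_def)
    qed
    ultimately show "\<exists>n>m. r' n \<in> F" using a by auto
  qed
  ultimately show ?thesis unfolding buchi_lang_def by blast
qed

lemma run_in_Q:
  assumes "r 0 \<in> I" "I \<subseteq> Q" "\<forall>q a. q \<in> Q \<longrightarrow> \<delta> q a \<subseteq> Q"
    and "\<forall>i. r (Suc i) \<in> \<delta> (r i) (w i)"
  shows "r n \<in> Q"
  using assms by (induction n) (use assms in blast)+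

lemma key:
  fixes x :: "('a::finite) word"
  assumes "omega_regular A" "omega_regular B" "x \<in> A" "x \<in> B"
  shows "\<exists>i j. i < j \<and> prefix i x \<frown> (x [i \<rightarrow> j])\<^sup>\<omega> \<in> A
                \<and> prefix i x \<frown> (x [i \<rightarrow> j])\<^sup>\<omega> \<in> B"
proof -
  obtain Q1 I1 \<delta>1 F1 where A: "finite Q1" "I1 \<subseteq> Q1"
     "\<forall>q a. q \<in> Q1 \<longrightarrow> \<delta>1 q a \<subseteq> Q1" "A = buchi_lang I1 \<delta>1 F1"
    using assms(1) unfolding omega_regular_def by blast
  obtain Q2 I2 \<delta>2 F2 where B: "finite Q2" "I2 \<subseteq> Q2"
     "\<forall>q a. q \<in> Q2 \<longrightarrow> \<delta>2 q a \<subseteq> Q2" "B = buchi_lang I2 \<delta>2 F2"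
    using assms(2) unfolding omega_regular_def by blast
  obtain r1 where r1: "r1 0 \<in> I1" "\<forall>i. r1 (Suc i) \<in> \<delta>1 (r1 i) (x i)" "\<exists>\<^sub>\<infinity>i. r1 i \<in> F1"
    using assms(3) A(4) unfolding buchi_lang_def by blast
  obtain r2 where r2: "r2 0 \<in> I2" "\<forall>i. r2 (Suc i) \<in> \<delta>2 (r2 i) (x i)" "\<exists>\<^sub>\<infinity>i. r2 i \<in> F2"
    using assms(4) B(4) unfolding buchi_lang_def by blast
  define p where "p n = (r1 n, r2 n)" for n
  have "range p \<subseteq> Q1 \<times> Q2"
    using run_in_Q[OF r1(1) A(2) A(3) r1(2)] run_in_Q[OF r2(1) B(2) B(3) r2(2)]
    by (auto simp: p_def)
  then have "finite (range p)" using A(1) B(1) finite_subset by blast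
  then obtain i where "infinite {n \<in> UNIV. p n = p i}"
    using pigeonhole_infinite[of "UNIV :: nat set" p] by auto
  then have inf: "infinite {n. p n = p i}" by simp
  obtain a1 where a1: "a1 > i" "r1 a1 \<in> F1" using r1(3) unfolding INFM_nat by blast
  obtain a2 where a2: "a2 > i" "r2 a2 \<in> F2" using r2(3) unfolding INFM_nat by blast
  obtain j where j: "j > max a1 a2" "p j = p i"
    using inf unfolding infinite_nat_iff_unbounded by blast
  have ij: "i < j" using j a1 by simp
  have "prefix i x \<frown> (x [i \<rightarrow> j])\<^sup>\<omega> \<in> A"
  proof -
    have e: "r1 i = r1 j" using j by (simp add: p_def)
    have "i \<le> a1" "a1 < j" using j a1 by auto
    with a1 r1 show ?thesis unfolding A(4) using lasso_run[where a=a1 and r=r1 and x=x and i=i and j=j and \<delta>=\<delta>1 and F=F1 and I=I1] e ij by blast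
  qed
  moreover have "prefix i x \<frown> (x [i \<rightarrow> j])\<^sup>\<omega> \<in> B"
  proof -
    have e: "r2 i = r2 j" using j by (simp add: p_def)
    have "i \<le> a2" "a2 < j" using j a2 by auto
    with a2 r2 show ?thesis unfolding B(4) using lasso_run[where a=a2 and r=r2 and x=x and i=i and j=j and \<delta>=\<delta>2 and F=F2 and I=I2] e ij by blast
  qed
  ultimately show ?thesis using ij by blast
qed

theorem lemma17:
  fixes R :: "(('a::finite) word \<times> 'a word) set"
  assumes "omega_recognizable R"
    and "preorder_on UNIV R"
  shows "(\<forall>x. \<exists>\<mu> \<nu>. \<nu> \<noteq> [] \<and> induced_equiv R x (\<mu> \<frown> \<nu>\<^sup>\<omega>))
       \<and> (\<forall>x. \<exists>\<mu> \<nu>. \<nu> \<noteq> [] \<and> prefix (length (\<mu> @ \<nu>)) x = \<mu> @ \<nu>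
                    \<and> induced_equiv R x (\<mu> \<frown> \<nu>\<^sup>\<omega>))"
proof -
  obtain l :: nat and X Y where XY: "\<forall>k\<in>{1..l}. omega_regular (X k) \<and> omega_regular (Y k)"
    "R = (\<Union>k\<in>{1..l}. X k \<times> Y k)"
    using assms(1) unfolding omega_recognizable_def by blast
  have refl: "(x, x) \<in> R" for x
    using assms(2) unfolding preorder_on_def refl_on_def by blast
  have second: "\<exists>\<mu> \<nu>. \<nu> \<noteq> [] \<and> prefix (length (\<mu> @ \<nu>)) x = \<mu> @ \<nu>
                    \<and> induced_equiv R x (\<mu> \<frown> \<nu>\<^sup>\<omega>)" for x
  proof -
    obtain k where k: "k \<in> {1..l}" "x \<in> X k" "x \<in> Y k" using refl[of x] XY(2) by blast
    obtain i j where ij: "i < j" "prefix i x \<frown> (x [i \<rightarrow> j])\<^sup>\<omega> \<in> X k"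
      "prefix i x \<frown> (x [i \<rightarrow> j])\<^sup>\<omega> \<in> Y k"
      using key[of "X k" "Y k" x] XY(1) k by blast
    have pre: "prefix (length (prefix i x @ x [i \<rightarrow> j])) x = prefix i x @ x [i \<rightarrow> j]"
    proof -
      have "length (prefix i x @ x [i \<rightarrow> j]) = i + (j - i)" by simp
      then show ?thesis by (simp only: subsequence_append) (use ij in simp)
    qed
    show ?thesis
      apply (rule exI[of _ "prefix i x"], rule exI[of _ "x [i \<rightarrow> j]"])
      using ij k pre XY(2) unfolding induced_equiv_def by auto
  qed
  then show ?thesis by blast
qed

end
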